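(* Let $f$ and $g$ be balanced flows such that the product $fg$ is defined. Then $fg$ is balanced and $h(fg)\le\max\{h(f),h(g)\}$. Consequently the set $\mathcal B$ of balanced wirings is closed under products of wirings (and is a semiring).
   Context: Terms: first-order terms built from an infinite set of variables, a binary function symbol $\bullet$ written infix, infinitely many constant symbols including a distinguished constant $\star$, and for each $n\ge1$ at least one $n$-ary function symbol. $\mathrm{var}(t)$ is the set of variables of $t$. The height $h(t)$ is the maximal distance from the root to a node in the tree of $t$; the height of an occurrence of a variable in $t$ is its distance from the root. A renaming is a bijective substitution mapping variables to variables. A flow is a pair of terms written $t\leftarrow u$ with $\mathrm{var}(t)\subseteq\mathrm{var}(u)$, considered up to renaming. The product of flows $u\leftarrow v$ and $t\leftarrow w$ (representatives chosen with disjoint variable sets) is defined iff $v$ and $t$ are unifiable, and then equals $u\theta\leftarrow w\theta$ with $\theta$ a most general unifier of $v,t$. A wiring is a finite set of flows; product of wirings $FG=\{fg: f\in F,g\in G, fg\text{ defined}\}$, sum is union, $0$ is the empty wiring. A flow $t\leftarrow u$ is balanced if for every variable $x$, all occurrences of $x$ in $t$ and in $u$ have the same height; a wiring is balanced if all its flows are balanced; $\mathcal B$ is the set of balanced wirings. The height of a flow $t\leftarrow u$ is $\max\{h(t),h(u)\}$. A semiring is a set of wirings containing $0$ and closed under finite sums and products. *)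

theory Defs
  imports Main
begin

datatype sym = Bullet | Star | Cst nat | Sym nat nat

fun arity :: "sym \<Rightarrow> nat" where
  "arity Bullet = 2"
| "arity Star = 0"
| "arity (Cst _) = 0"
| "arity (Sym n _) = n"

datatype trm = Var nat | App sym "trm list"

fun wf_trm :: "trm \<Rightarrow> bool" where
  "wf_trm (Var x) = True"
| "wf_trm (App f ts) = (length ts = arity f \<and> (\<forall>t\<in>set ts. wf_trm t))"

fun vars :: "trm \<Rightarrow> nat set" where
  "vars (Var x) = {x}"
| "vars (App f ts) = \<Union> (vars ` set ts)"

fun hgt :: "trm \<Rightarrow> nat" where
  "hgt (Var x) = 0"
| "hgt (App f ts) = (if ts = [] then 0 else Suc (Max (hgt ` set ts)))"

fun occ_heights :: "nat \<Rightarrow> trm \<Rightarrow> nat set" where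
  "occ_heights x (Var y) = (if x = y then {0} else {})"
| "occ_heights x (App f ts) = Suc ` \<Union> (occ_heights x ` set ts)"

fun sapp :: "(nat \<Rightarrow> trm) \<Rightarrow> trm \<Rightarrow> trm" where
  "sapp \<sigma> (Var x) = \<sigma> x"
| "sapp \<sigma> (App f ts) = App f (map (sapp \<sigma>) ts)"

definition renaming :: "(nat \<Rightarrow> trm) \<Rightarrow> bool" where
  "renaming \<rho> \<longleftrightarrow> (\<exists>\<pi>. bij \<pi> \<and> \<rho> = (\<lambda>x. Var (\<pi> x)))"

definition unifier :: "(nat \<Rightarrow> trm) \<Rightarrow> trm \<Rightarrow> trm \<Rightarrow> bool" where
  "unifier \<theta> s t \<longleftrightarrow> sapp \<theta> s = sapp \<theta> t"

definition mgu :: "(nat \<Rightarrow> trm) \<Rightarrow> trm \<Rightarrow> trm \<Rightarrow> bool" where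
  "mgu \<theta> s t \<longleftrightarrow> unifier \<theta> s t \<and>
     (\<forall>\<sigma>. unifier \<sigma> s t \<longrightarrow> (\<exists>\<tau>. \<forall>x. \<sigma> x = sapp \<tau> (\<theta> x)))"

section \<open>Flows (represented by pairs (t,u), meaning t \<leftarrow> u)\<close>

definition is_flow :: "trm \<times> trm \<Rightarrow> bool" where
  "is_flow p \<longleftrightarrow> wf_trm (fst p) \<and> wf_trm (snd p) \<and> vars (fst p) \<subseteq> vars (snd p)"

definition balanced :: "trm \<times> trm \<Rightarrow> bool" where
  "balanced p \<longleftrightarrow> (\<forall>x. \<forall>a \<in> occ_heights x (fst p) \<union> occ_heights x (snd p).
                     \<forall>b \<in> occ_heights x (fst p) \<union> occ_heights x (snd p). a = b)"

definition flow_hgt :: "trm \<times> trm \<Rightarrow> nat" where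
  "flow_hgt p = max (hgt (fst p)) (hgt (snd p))"

text \<open>r is (a representative of) the product of the flows represented by
(u,v) and (t,w): the second flow is renamed apart by a renaming \<rho>, and
\<theta> is a most general unifier of v and t\<rho>; then r = u\<theta> \<leftarrow> w\<rho>\<theta>.
The product is defined iff such an r exists.\<close>

definition flow_prod :: "trm \<times> trm \<Rightarrow> trm \<times> trm \<Rightarrow> trm \<times> trm \<Rightarrow> bool" where
  "flow_prod f g r \<longleftrightarrow> (\<exists>\<rho> \<theta>. renaming \<rho> \<and>
      (vars (fst f) \<union> vars (snd f)) \<inter>
        (vars (sapp \<rho> (fst g)) \<union> vars (sapp \<rho> (snd g))) = {} \<and>
      mgu \<theta> (snd f) (sapp \<rho> (fst g)) \<and>
      r = (sapp \<theta> (fst f), sapp \<theta> (sapp \<rho> (snd g))))"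

definition ren_eq :: "trm \<times> trm \<Rightarrow> trm \<times> trm \<Rightarrow> bool" where
  "ren_eq p q \<longleftrightarrow> (\<exists>\<rho>. renaming \<rho> \<and> q = (sapp \<rho> (fst p), sapp \<rho> (snd p)))"

definition cls :: "trm \<times> trm \<Rightarrow> (trm \<times> trm) set" where
  "cls p = {q. ren_eq p q}"

text \<open>A flow (up to renaming) is a renaming class of a representative flow.\<close>

definition flow_classes :: "(trm \<times> trm) set set" where
  "flow_classes = {cls p | p. is_flow p}"

definition wiring :: "(trm \<times> trm) set set \<Rightarrow> bool" where
  "wiring W \<longleftrightarrow> finite W \<and> W \<subseteq> flow_classes"

text \<open>Product of two flow classes: the set of classes of products of
representatives (empty if undefined; a singleton otherwise).\<close>

definition cprod :: "(trm \<times> trm) set \<Rightarrow> (trm \<times> trm) set \<Rightarrow> (trm \<times> trm) set set" where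
  "cprod F G = {cls r | r. \<exists>p\<in>F. \<exists>q\<in>G. flow_prod p q r}"

definition wprod :: "(trm \<times> trm) set set \<Rightarrow> (trm \<times> trm) set set \<Rightarrow> (trm \<times> trm) set set" where
  "wprod A B = \<Union> {cprod f g | f g. f \<in> A \<and> g \<in> B}"

definition balanced_wirings :: "(trm \<times> trm) set set set" where
  "balanced_wirings = {W. wiring W \<and> (\<forall>c\<in>W. \<forall>p\<in>c. balanced p)}"

definition semiring_of_wirings :: "(trm \<times> trm) set set set \<Rightarrow> bool" where
  "semiring_of_wirings S \<longleftrightarrow> (\<forall>W\<in>S. wiring W) \<and> {} \<in> S \<and>
     (\<forall>A\<in>S. \<forall>B\<in>S. A \<union> B \<in> S) \<and> (\<forall>A\<in>S. \<forall>B\<in>S. wprod A B \<in> S)"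

end

theory Submission
  imports Defs "HOL-Library.Countable_Set"
begin


lemma sapp_comp: "sapp \<sigma> (sapp \<tau> t) = sapp (\<lambda>x. sapp \<sigma> (\<tau> x)) t"
  by (induction t) auto

lemma sapp_cong: "(\<And>x. x \<in> vars t \<Longrightarrow> \<sigma> x = \<tau> x) \<Longrightarrow> sapp \<sigma> t = sapp \<tau> t"
  by (induction t) auto

lemma vars_sapp: "vars (sapp \<sigma> t) = (\<Union>x\<in>vars t. vars (\<sigma> x))"
  by (induction t) auto

lemma occ_ne: "occ_heights x t \<noteq> {} \<longleftrightarrow> x \<in> vars t"
  by (induction t) auto

lemma hgt_App_le: "k + hgt (App f ts) \<le> B \<longleftrightarrow> k \<le> B \<and> (\<forall>c\<in>set ts. Suc k + hgt c \<le> B)"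
proof (cases "ts = []")
  case False
  have mx: "Max (hgt ` set ts) \<le> B' \<longleftrightarrow> (\<forall>c\<in>set ts. hgt c \<le> B')" for B'
    using False by (simp add: Max_le_iff)
  then have "k + Suc (Max (hgt ` set ts)) \<le> B \<longleftrightarrow> (\<forall>c\<in>set ts. Suc k + hgt c \<le> B)"
  proof (cases "Suc k \<le> B")
    case True
    have e: "Suc (k + M) \<le> B \<longleftrightarrow> M \<le> B - Suc k" for M :: nat using True by arith
    show ?thesis using e[of "Max (hgt ` set ts)"] e mx[of "B - Suc k"] by simp
  next
    case False
    then show ?thesis using False \<open>ts \<noteq> []\<close> by (auto simp: neq_Nil_conv)
  qed
  with False show ?thesis by auto
qed simp


lemma occ_ren: "inj \<pi> \<Longrightarrow> occ_heights (\<pi> y) (sapp (\<lambda>x. Var (\<pi> x)) t) = occ_heights y t"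
  by (induction t) (auto simp: inj_eq)

lemma hgt_ren: "hgt (sapp (\<lambda>x. Var (\<pi> x)) t) = hgt t"
proof (induction t)
  case (App f ts)
  have "hgt ` sapp (\<lambda>x. Var (\<pi> x)) ` set ts = hgt ` set ts"
    using App by (force simp: image_image)
  then show ?case by simp
qed simp

lemma wf_ren: "wf_trm (sapp (\<lambda>x. Var (\<pi> x)) t) = wf_trm t"
  by (induction t) auto

lemma vars_ren: "vars (sapp (\<lambda>x. Var (\<pi> x)) t) = \<pi> ` vars t"
  by (simp add: vars_sapp) blast

lemma occ_le_hgt: "h \<in> occ_heights x t \<Longrightarrow> h \<le> hgt t"
proof (induction t arbitrary: h)
  case (App f ts)
  then obtain c h' where c: "c \<in> set ts" "h' \<in> occ_heights x c" "h = Suc h'" by auto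
  have "0 + hgt (App f ts) \<le> hgt (App f ts)" by simp
  then have "Suc (hgt c) \<le> hgt (App f ts)" using c(1) unfolding hgt_App_le by auto
  with App.IH[OF c(1,2)] c(3) show ?case by simp
qed (auto split: if_splits)

lemma occ_sapp: "a \<in> occ_heights y (sapp \<theta> t) \<Longrightarrow>
   \<exists>x\<in>vars t. \<exists>h\<in>occ_heights x t. \<exists>j\<in>occ_heights y (\<theta> x). a = h + j"
proof (induction t arbitrary: a)
  case (Var x)
  then show ?case by force
next
  case (App f ts)
  then obtain c a' where c: "c \<in> set ts" "a' \<in> occ_heights y (sapp \<theta> c)" "a = Suc a'" by auto
  from App.IH[OF c(1,2)] obtain x h j where "x \<in> vars c" "h \<in> occ_heights x c"
     "j \<in> occ_heights y (\<theta> x)" "a' = h + j" by blast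
  note xh = this
  have "x \<in> vars (App f ts)" "Suc h \<in> occ_heights x (App f ts)" "a = Suc h + j"
    using xh c by auto
  then show ?case using xh(3) by blast
qed

fun ann :: "nat \<Rightarrow> trm \<Rightarrow> trm" where
  "ann k (Var y) = Var (prod_encode (y, k))"
| "ann k (App f ts) = App f (map (ann (Suc k)) ts)"

lemma lemA: "(\<forall>x\<in>vars t. \<forall>h\<in>occ_heights x t. k + h = d x) \<Longrightarrow>
   ann k (sapp \<theta> t) = sapp (\<lambda>x. ann (d x) (\<theta> x)) t"
proof (induction t arbitrary: k)
  case (App f ts)
  have "ann (Suc k) (sapp \<theta> c) = sapp (\<lambda>x. ann (d x) (\<theta> x)) c" if "c \<in> set ts" for c
    using App.prems that by (intro App.IH) force+
  then show ?case by simp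
qed simp

lemma lemB: "sapp \<tau> s = ann k s \<Longrightarrow> j \<in> occ_heights y s \<Longrightarrow> \<tau> y = Var (prod_encode (y, k + j))"
proof (induction s arbitrary: k j)
  case (Var x)
  then show ?case by (auto split: if_splits)
next
  case (App f ts)
  then obtain c j' where c: "c \<in> set ts" "j' \<in> occ_heights y c" "j = Suc j'" by auto
  from App.prems(1) c(1) have "sapp \<tau> c = ann (Suc k) c" by (simp add: map_eq_conv)
  from App.IH[OF c(1) this c(2)] c(3) show ?case by simp
qed

fun cut :: "nat \<Rightarrow> trm \<Rightarrow> trm" where
  "cut 0 s = (case s of Var y \<Rightarrow> Var 0 | App f ts \<Rightarrow> if ts = [] then s else Var 0)"
| "cut (Suc k) (Var y) = Var y"
| "cut (Suc k) (App f ts) = App f (map (cut k) ts)"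

lemma hgt_App_0: "hgt (App f ts) = 0 \<longleftrightarrow> ts = []" by simp

lemma lemC: "(\<forall>x\<in>vars t. \<forall>h\<in>occ_heights x t. k + h = d x) \<Longrightarrow> k + hgt t \<le> H \<Longrightarrow>
   (\<forall>x\<in>vars t. \<sigma> x = cut (H - d x) (\<theta> x)) \<Longrightarrow> cut (H - k) (sapp \<theta> t) = sapp \<sigma> t"
proof (induction t arbitrary: k)
  case (Var x)
  then show ?case by simp
next
  case (App f ts)
  show ?case
  proof (cases "H - k")
    case 0
    with App.prems(2) have "ts = []" by (cases ts) auto
    then show ?thesis using 0 by simp
  next
    case (Suc m)
    have "cut m (sapp \<theta> c) = sapp \<sigma> c" if "c \<in> set ts" for c
    proof -
      have "H - Suc k = m" using Suc by simp
      moreover have "cut (H - Suc k) (sapp \<theta> c) = sapp \<sigma> c"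
        using App.prems that unfolding hgt_App_le by (intro App.IH) force+
      ultimately show ?thesis by simp
    qed
    then show ?thesis using Suc by simp
  qed
qed

lemma lemD: "sapp \<tau> s = cut m s \<Longrightarrow> hgt s \<le> m"
proof (induction s arbitrary: m)
  case (Var x)
  then show ?case by simp
next
  case (App f ts)
  show ?case
  proof (cases m)
    case 0
    then show ?thesis using App.prems by (auto split: if_splits)
  next
    case (Suc m')
    have "Suc (hgt c) \<le> m" if "c \<in> set ts" for c
    proof -
      from App.prems that Suc have "sapp \<tau> c = cut m' c" by (simp add: map_eq_conv)
      from App.IH[OF that this] Suc show ?thesis by simp
    qed
    then have "0 + hgt (App f ts) \<le> m" unfolding hgt_App_le by simp
    then show ?thesis by simp
  qed
qed

fun wfify :: "trm \<Rightarrow> trm" where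
  "wfify (Var y) = Var y"
| "wfify (App f ts) = (if length ts = arity f then App f (map wfify ts) else Var 0)"

lemma wfify_sapp: "wf_trm t \<Longrightarrow> wfify (sapp \<theta> t) = sapp (\<lambda>x. wfify (\<theta> x)) t"
  by (induction t) auto

lemma wfify_inst: "sapp \<tau> s = wfify s \<Longrightarrow> wf_trm s"
proof (induction s)
  case (App f ts)
  then show ?case by (auto split: if_splits simp: map_eq_conv)
qed simp

lemma wf_sapp: "wf_trm t \<Longrightarrow> (\<forall>x\<in>vars t. wf_trm (\<theta> x)) \<Longrightarrow> wf_trm (sapp \<theta> t)"
  by (induction t) auto

lemma lemF: "(\<forall>x\<in>vars t. \<forall>h\<in>occ_heights x t. k + h + hgt (\<theta> x) \<le> B) \<Longrightarrow> k + hgt t \<le> B \<Longrightarrow>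
   k + hgt (sapp \<theta> t) \<le> B"
proof (induction t arbitrary: k)
  case (Var x)
  then show ?case by simp
next
  case (App f ts)
  have "Suc k + hgt (sapp \<theta> c) \<le> B" if "c \<in> set ts" for c
    using App.prems that unfolding hgt_App_le by (intro App.IH) force+
  then show ?case using App.prems(2) unfolding sapp.simps hgt_App_le by auto
qed

lemma map_fix: "map f xs = xs \<Longrightarrow> x \<in> set xs \<Longrightarrow> f x = x"
  by (induction xs) auto

lemma lemG: "sapp \<tau>' (sapp \<tau> s) = s \<Longrightarrow> y \<in> vars s \<Longrightarrow> \<exists>y'. \<tau> y = Var y' \<and> \<tau>' y' = Var y"
proof (induction s)
  case (Var x)
  then show ?case by (cases "\<tau> x") auto
next
  case (App f ts)
  then obtain c where c: "c \<in> set ts" "y \<in> vars c" by auto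
  have "sapp \<tau>' (sapp \<tau> c) = c" using map_fix[of "\<lambda>c. sapp \<tau>' (sapp \<tau> c)" ts c] App.prems c
    by (simp add: comp_def)
  from App.IH[OF c(1) this c(2)] show ?case .
qed



lemma mguD: "mgu \<theta> s t \<Longrightarrow> sapp \<theta> s = sapp \<theta> t"
  "mgu \<theta> s t \<Longrightarrow> sapp \<sigma> s = sapp \<sigma> t \<Longrightarrow> \<exists>\<tau>. \<forall>x. \<sigma> x = sapp \<tau> (\<theta> x)"
  by (auto simp: mgu_def unifier_def)

lemma core_bal:
  assumes mgu: "mgu \<theta> v t1"
  and d: "\<And>x h. h \<in> occ_heights x u \<union> occ_heights x v \<union> occ_heights x t1 \<union> occ_heights x w1 \<Longrightarrow> h = d x"
  shows "balanced (sapp \<theta> u, sapp \<theta> w1)"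
proof -
  let ?\<theta>' = "\<lambda>x. ann (d x) (\<theta> x)"
  have "sapp ?\<theta>' v = ann 0 (sapp \<theta> v)" by (rule lemA[symmetric]) (use d in auto)
  moreover have "sapp ?\<theta>' t1 = ann 0 (sapp \<theta> t1)" by (rule lemA[symmetric]) (use d in auto)
  ultimately have "sapp ?\<theta>' v = sapp ?\<theta>' t1" using mguD(1)[OF mgu] by simp
  from mguD(2)[OF mgu this] obtain \<tau> where \<tau>: "\<And>x. ann (d x) (\<theta> x) = sapp \<tau> (\<theta> x)" by blast
  have key: "\<tau> y = Var (prod_encode (y, d x + j))" if "j \<in> occ_heights y (\<theta> x)" for x y j
    using lemB[OF \<tau>[symmetric] that] .
  have key2: "\<tau> y = Var (prod_encode (y, a))"
    if "a \<in> occ_heights y (sapp \<theta> u) \<union> occ_heights y (sapp \<theta> w1)" for y a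
  proof -
    from that obtain x h j where "h \<in> occ_heights x u \<union> occ_heights x w1"
      "j \<in> occ_heights y (\<theta> x)" "a = h + j"
      by (auto dest!: occ_sapp)
    moreover then have "h = d x" using d by blast
    ultimately show ?thesis using key by simp
  qed
  show ?thesis unfolding balanced_def fst_conv snd_conv
  proof (intro allI ballI)
    fix y a b assume "a \<in> occ_heights y (sapp \<theta> u) \<union> occ_heights y (sapp \<theta> w1)"
      "b \<in> occ_heights y (sapp \<theta> u) \<union> occ_heights y (sapp \<theta> w1)"
    then have "prod_encode (y,a) = prod_encode (y,b)" using key2 by (metis trm.inject(1))
    then show "a = b" by (simp add: prod_encode_eq)
  qed
qed

lemma core_hgt:
  assumes mgu: "mgu \<theta> v t1"
  and d: "\<And>x h. h \<in> occ_heights x u \<union> occ_heights x v \<union> occ_heights x t1 \<union> occ_heights x w1 \<Longrightarrow> h = d x"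
  and uv: "vars u \<subseteq> vars v"
  shows "hgt (sapp \<theta> u) \<le> max (max (hgt u) (hgt v)) (max (hgt t1) (hgt w1))"
    and "hgt (sapp \<theta> w1) \<le> max (max (hgt u) (hgt v)) (max (hgt t1) (hgt w1))"
proof -
  define H where "H = max (hgt v) (hgt t1)"
  define M where "M = max (max (hgt u) (hgt v)) (max (hgt t1) (hgt w1))"
  define \<sigma> where "\<sigma> x = (if x \<in> vars v \<union> vars t1 then cut (H - d x) (\<theta> x) else cut 0 (\<theta> x))" for x
  have "cut (H - 0) (sapp \<theta> v) = sapp \<sigma> v"
    by (rule lemC) (use d in \<open>auto simp: H_def \<sigma>_def\<close>)
  moreover have "cut (H - 0) (sapp \<theta> t1) = sapp \<sigma> t1"
    by (rule lemC) (use d in \<open>auto simp: H_def \<sigma>_def\<close>)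
  ultimately have "sapp \<sigma> v = sapp \<sigma> t1" using mguD(1)[OF mgu] by simp
  from mguD(2)[OF mgu this] obtain \<tau> where \<tau>: "\<And>x. \<sigma> x = sapp \<tau> (\<theta> x)" by blast
  have hx: "d x + hgt (\<theta> x) \<le> H" if "x \<in> vars v \<union> vars t1" for x
  proof -
    have "sapp \<tau> (\<theta> x) = cut (H - d x) (\<theta> x)" using \<tau>[of x] that by (simp add: \<sigma>_def)
    then have "hgt (\<theta> x) \<le> H - d x" by (rule lemD)
    moreover have "d x \<le> H"
    proof (cases "x \<in> vars v")
      case True
      then obtain h where "h \<in> occ_heights x v" using occ_ne by blast
      then show ?thesis using d[of h x] occ_le_hgt[of h x v] by (auto simp: H_def)
    next
      case False
      then have "x \<in> vars t1" using that by auto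
      then obtain h where "h \<in> occ_heights x t1" using occ_ne by blast
      then show ?thesis using d[of h x] occ_le_hgt[of h x t1] by (auto simp: H_def)
    qed
    ultimately show ?thesis by simp
  qed
  have h0: "hgt (\<theta> x) = 0" if "x \<notin> vars v \<union> vars t1" for x
  proof -
    have "sapp \<tau> (\<theta> x) = cut 0 (\<theta> x)" using \<tau>[of x] that by (simp add: \<sigma>_def)
    then show ?thesis using lemD by fastforce
  qed
  have HM: "H \<le> M" by (auto simp: H_def M_def)
  have "0 + hgt (sapp \<theta> u) \<le> M"
  proof (rule lemF)
    show "\<forall>x\<in>vars u. \<forall>h\<in>occ_heights x u. 0 + h + hgt (\<theta> x) \<le> M"
      using hx d uv HM by fastforce
  qed (auto simp: M_def)
  then show "hgt (sapp \<theta> u) \<le> max (max (hgt u) (hgt v)) (max (hgt t1) (hgt w1))"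
    by (simp add: M_def)
  have "0 + hgt (sapp \<theta> w1) \<le> M"
  proof (rule lemF)
    show "\<forall>x\<in>vars w1. \<forall>h\<in>occ_heights x w1. 0 + h + hgt (\<theta> x) \<le> M"
    proof (intro ballI)
      fix x h assume "x \<in> vars w1" "h \<in> occ_heights x w1"
      then have hd: "h = d x" using d by blast
      show "0 + h + hgt (\<theta> x) \<le> M"
      proof (cases "x \<in> vars v \<union> vars t1")
        case True then show ?thesis using hx hd HM by fastforce
      next
        case False then show ?thesis using h0 occ_le_hgt[OF \<open>h \<in> _\<close>] by (auto simp: M_def)
      qed
    qed
  qed (auto simp: M_def)
  then show "hgt (sapp \<theta> w1) \<le> max (max (hgt u) (hgt v)) (max (hgt t1) (hgt w1))"
    by (simp add: M_def)
qed

lemma core_flow: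
  assumes mgu: "mgu \<theta> v t1"
  and wf: "wf_trm u" "wf_trm v" "wf_trm t1" "wf_trm w1"
  and uv: "vars u \<subseteq> vars v" and tw: "vars t1 \<subseteq> vars w1"
  shows "is_flow (sapp \<theta> u, sapp \<theta> w1)"
proof -
  let ?\<sigma> = "\<lambda>x. wfify (\<theta> x)"
  have "sapp ?\<sigma> v = sapp ?\<sigma> t1"
    using wfify_sapp[OF wf(2), of \<theta>] wfify_sapp[OF wf(3), of \<theta>] mguD(1)[OF mgu] by simp
  from mguD(2)[OF mgu this] obtain \<tau> where \<tau>: "\<And>x. wfify (\<theta> x) = sapp \<tau> (\<theta> x)" by blast
  have wx: "wf_trm (\<theta> x)" for x using wfify_inst[OF \<tau>[symmetric]] .
  have "vars (sapp \<theta> v) = vars (sapp \<theta> t1)" using mguD(1)[OF mgu] by simp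
  then have "vars (sapp \<theta> u) \<subseteq> vars (sapp \<theta> w1)"
    using uv tw unfolding vars_sapp by blast
  then show ?thesis unfolding is_flow_def using wf wx by (auto intro!: wf_sapp)
qed



definition ren :: "(nat \<Rightarrow> nat) \<Rightarrow> trm \<times> trm \<Rightarrow> trm \<times> trm" where
  "ren \<pi> p = (sapp (\<lambda>x. Var (\<pi> x)) (fst p), sapp (\<lambda>x. Var (\<pi> x)) (snd p))"

lemma balanced_ren: assumes "balanced p" "bij \<pi>" shows "balanced (ren \<pi> p)"
  unfolding balanced_def ren_def fst_conv snd_conv
proof (intro allI)
  fix x
  have inj: "inj \<pi>" using assms(2) bij_is_inj by blast
  have x: "x = \<pi> (inv \<pi> x)" using assms(2) by (simp add: bij_is_surj surj_f_inv_f)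
  show "\<forall>a\<in>occ_heights x (sapp (\<lambda>x. Var (\<pi> x)) (fst p)) \<union> occ_heights x (sapp (\<lambda>x. Var (\<pi> x)) (snd p)).
            \<forall>b\<in>occ_heights x (sapp (\<lambda>x. Var (\<pi> x)) (fst p)) \<union> occ_heights x (sapp (\<lambda>x. Var (\<pi> x)) (snd p)). a = b"
    apply (subst (1 2 3 4) x)
    using assms(1) unfolding occ_ren[OF inj] balanced_def by blast
qed

lemma is_flow_ren: assumes "is_flow p" shows "is_flow (ren \<pi> p)"
  using assms unfolding is_flow_def ren_def by (auto simp: wf_ren vars_ren)

lemma part1:
  assumes "is_flow f" "is_flow g" "balanced f" "balanced g" "flow_prod f g r"
  shows "balanced r \<and> flow_hgt r \<le> max (flow_hgt f) (flow_hgt g) \<and> is_flow r"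
proof -
  from assms(5) obtain \<pi> \<theta> where \<pi>: "bij \<pi>"
    and disj: "(vars (fst f) \<union> vars (snd f)) \<inter>
        (vars (sapp (\<lambda>x. Var (\<pi> x)) (fst g)) \<union> vars (sapp (\<lambda>x. Var (\<pi> x)) (snd g))) = {}"
    and mgu: "mgu \<theta> (snd f) (sapp (\<lambda>x. Var (\<pi> x)) (fst g))"
    and r: "r = (sapp \<theta> (fst f), sapp \<theta> (sapp (\<lambda>x. Var (\<pi> x)) (snd g)))"
    unfolding flow_prod_def renaming_def by blast
  define u where "u = fst f"
  define v where "v = snd f"
  define t1 where "t1 = sapp (\<lambda>x. Var (\<pi> x)) (fst g)"
  define w1 where "w1 = sapp (\<lambda>x. Var (\<pi> x)) (snd g)"
  have bg: "balanced (t1, w1)" using balanced_ren[OF assms(4) \<pi>] by (simp add: ren_def t1_def w1_def)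
  have bf: "balanced (u, v)" using assms(3) by (simp add: u_def v_def)
  define Oc where "Oc x = occ_heights x u \<union> occ_heights x v \<union> occ_heights x t1 \<union> occ_heights x w1" for x
  define d where "d x = (SOME h. h \<in> Oc x)" for x
  have same: "a = b" if "a \<in> Oc x" "b \<in> Oc x" for x a b
  proof (cases "x \<in> vars u \<union> vars v")
    case True
    then have "x \<notin> vars t1 \<union> vars w1" using disj by (auto simp: u_def v_def t1_def w1_def)
    then have "occ_heights x t1 = {}" "occ_heights x w1 = {}" using occ_ne by blast+
    then show ?thesis using that bf unfolding Oc_def balanced_def by auto
  next
    case False
    then have "occ_heights x u = {}" "occ_heights x v = {}" using occ_ne by blast+
    then show ?thesis using that bg unfolding Oc_def balanced_def by auto
  qed
  have d: "h = d x" if "h \<in> Oc x" for h x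
    using same[OF that someI[of "\<lambda>h. h \<in> Oc x", OF that]] by (simp add: d_def)
  have d': "\<And>x h. h \<in> occ_heights x u \<union> occ_heights x v \<union> occ_heights x t1 \<union> occ_heights x w1 \<Longrightarrow> h = d x"
    using d unfolding Oc_def by blast
  have mgu': "mgu \<theta> v t1" using mgu by (simp add: v_def t1_def)
  have r': "r = (sapp \<theta> u, sapp \<theta> w1)" using r by (simp add: u_def w1_def)
  have uv: "vars u \<subseteq> vars v" using assms(1) by (simp add: is_flow_def u_def v_def)
  have bal: "balanced r" using core_bal[OF mgu' d'] r' by simp
  have h: "flow_hgt r \<le> max (flow_hgt f) (flow_hgt g)"
  proof -
    note h12 = core_hgt[of \<theta> v t1 u w1 d, OF mgu' d' uv]
    have "hgt t1 = hgt (fst g)" "hgt w1 = hgt (snd g)" by (simp_all add: t1_def w1_def hgt_ren)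
    then show ?thesis using h12 r' unfolding flow_hgt_def u_def v_def by simp
  qed
  have fl: "is_flow r" unfolding r'
    apply (rule core_flow[OF mgu'])
    using assms(1,2) by (auto simp: is_flow_def u_def v_def t1_def w1_def wf_ren vars_ren)
  show ?thesis using bal h fl by blast
qed



lemma finite_vars: "finite (vars t)"
  by (induction t) auto

lemma sapp_Var: "sapp Var t = t"
  by (induction t) (auto simp: map_idI)

lemma sapp_ren_ren: "sapp (\<lambda>x. Var (a x)) (sapp (\<lambda>x. Var (b x)) t) = sapp (\<lambda>x. Var (a (b x))) t"
  by (simp add: sapp_comp)

lemma ren_comp: "ren a (ren b p) = ren (a \<circ> b) p"
  by (simp add: ren_def sapp_ren_ren comp_def)

lemma ren_id: "ren id p = p" "ren (\<lambda>x. x) p = p"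
  by (simp_all add: ren_def sapp_Var[unfolded id_def] id_def)

lemma ren_eq_iff: "ren_eq p q \<longleftrightarrow> (\<exists>\<pi>. bij \<pi> \<and> q = ren \<pi> p)"
  unfolding ren_eq_def renaming_def ren_def by auto

lemma ren_eq_sym: "ren_eq p q \<Longrightarrow> ren_eq q p"
proof -
  assume "ren_eq p q"
  then obtain \<pi> where \<pi>: "bij \<pi>" "q = ren \<pi> p" by (auto simp: ren_eq_iff)
  have "ren (inv \<pi>) q = ren (inv \<pi> \<circ> \<pi>) p" by (simp add: \<pi> ren_comp)
  also have "inv \<pi> \<circ> \<pi> = id" using \<pi>(1) by (simp add: bij_is_inj)
  finally have "p = ren (inv \<pi>) q" by (simp add: ren_id)
  moreover have "bij (inv \<pi>)" using \<pi>(1) by (simp add: bij_imp_bij_inv)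
  ultimately show ?thesis by (auto simp: ren_eq_iff)
qed

lemma ren_eq_trans: "ren_eq p q \<Longrightarrow> ren_eq q s \<Longrightarrow> ren_eq p s"
proof -
  assume "ren_eq p q" "ren_eq q s"
  then obtain a b where ab: "bij a" "q = ren a p" "bij b" "s = ren b q" unfolding ren_eq_iff by blast
  then have "s = ren (b \<circ> a) p" "bij (b \<circ> a)" by (simp_all add: ren_comp bij_comp)
  then show ?thesis unfolding ren_eq_iff by blast
qed

lemma cls_eq: "ren_eq p q \<Longrightarrow> cls p = cls q"
proof -
  assume pq: "ren_eq p q"
  have "ren_eq q r" if "ren_eq p r" for r using ren_eq_trans[OF ren_eq_sym[OF pq] that] .
  moreover have "ren_eq p r" if "ren_eq q r" for r using ren_eq_trans[OF pq that] .
  ultimately show ?thesis unfolding cls_def by blast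
qed

lemma extend_bij:
  fixes \<pi> :: "nat \<Rightarrow> nat"
  assumes "finite Y" "inj_on \<pi> Y"
  shows "\<exists>\<pi>'. bij \<pi>' \<and> (\<forall>y\<in>Y. \<pi>' y = \<pi> y)"
proof -
  let ?A = "UNIV - Y" and ?B = "UNIV - \<pi> ` Y"
  have iA: "infinite ?A" using assms(1) by (simp add: Diff_infinite_finite)
  have iB: "infinite ?B" using assms(1) by (simp add: Diff_infinite_finite)
  have e1: "bij_betw (from_nat_into ?A) UNIV ?A" by (rule bij_betw_from_nat_into) (use iA in auto)
  have e2: "bij_betw (from_nat_into ?B) UNIV ?B" by (rule bij_betw_from_nat_into) (use iB in auto)
  define g where "g = from_nat_into ?B \<circ> inv_into UNIV (from_nat_into ?A)"
  have g: "bij_betw g ?A ?B" unfolding g_def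
    by (rule bij_betw_trans[OF bij_betw_inv_into[OF e1] e2])
  define \<pi>' where "\<pi>' x = (if x \<in> Y then \<pi> x else g x)" for x
  have b1: "bij_betw \<pi>' Y (\<pi> ` Y)"
    using inj_on_imp_bij_betw[OF assms(2)] by (rule bij_betw_cong[THEN iffD1, rotated]) (simp add: \<pi>'_def)
  have b2: "bij_betw \<pi>' ?A ?B"
    using g by (rule bij_betw_cong[THEN iffD1, rotated]) (simp add: \<pi>'_def)
  have "bij_betw \<pi>' (Y \<union> ?A) (\<pi> ` Y \<union> ?B)"
    by (rule bij_betw_combine[OF b1 b2]) auto
  then have "bij \<pi>'" by simp
  then show ?thesis by (auto simp: \<pi>'_def)
qed

lemma mgu_unique_ren:
  assumes mgu1: "mgu \<theta> v t1"
    and mgu2: "mgu \<theta>2 (sapp (\<lambda>x. Var (k x)) v) (sapp (\<lambda>x. Var (k x)) t1)"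
    and inj: "inj_on k V" and V: "V = vars u \<union> vars v \<union> vars t1 \<union> vars w1"
  shows "ren_eq (sapp \<theta> u, sapp \<theta> w1)
           (sapp \<theta>2 (sapp (\<lambda>x. Var (k x)) u), sapp \<theta>2 (sapp (\<lambda>x. Var (k x)) w1))"
proof -
  let ?\<kappa> = "\<lambda>x. Var (k x)"
  define \<eta> where "\<eta> x = \<theta>2 (k x)" for x
  have e: "sapp \<theta>2 (sapp ?\<kappa> t) = sapp \<eta> t" for t by (simp add: sapp_comp \<eta>_def[abs_def])
  have "sapp \<eta> v = sapp \<eta> t1" using mguD(1)[OF mgu2] by (simp add: e)
  from mguD(2)[OF mgu1 this] obtain \<tau> where \<tau>: "\<And>x. \<eta> x = sapp \<tau> (\<theta> x)" by blast
  define \<sigma> where "\<sigma> x = (if x \<in> k ` V then \<theta> (inv_into V k x) else \<theta>2 x)" for x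
  have e2: "sapp \<sigma> (sapp ?\<kappa> t) = sapp \<theta> t" if "vars t \<subseteq> V" for t
  proof -
    have "sapp \<sigma> (sapp ?\<kappa> t) = sapp (\<lambda>x. \<sigma> (k x)) t" by (simp add: sapp_comp)
    also have "\<dots> = sapp \<theta> t"
    proof (rule sapp_cong)
      fix x assume "x \<in> vars t"
      then have "x \<in> V" using that by blast
      then show "\<sigma> (k x) = \<theta> x" using inj by (simp add: \<sigma>_def inv_into_f_f)
    qed
    finally show ?thesis .
  qed
  have "sapp \<sigma> (sapp ?\<kappa> v) = sapp \<sigma> (sapp ?\<kappa> t1)"
  proof -
    have "vars v \<subseteq> V" "vars t1 \<subseteq> V" using V by auto
    then show ?thesis using e2[of v] e2[of t1] mguD(1)[OF mgu1] by simp
  qed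
  from mguD(2)[OF mgu2 this] obtain \<tau>' where \<tau>': "\<And>x. \<sigma> x = sapp \<tau>' (\<theta>2 x)" by blast
  have inv: "sapp \<tau>' (sapp \<tau> (\<theta> z)) = \<theta> z" if "z \<in> V" for z
  proof -
    have "\<theta> z = \<sigma> (k z)" using that inj by (simp add: \<sigma>_def inv_into_f_f)
    also have "\<dots> = sapp \<tau>' (\<eta> z)" by (simp add: \<tau>' \<eta>_def)
    finally show ?thesis unfolding \<tau> by (rule sym)
  qed
  define \<pi> where "\<pi> y = (case \<tau> y of Var y' \<Rightarrow> y' | _ \<Rightarrow> y)" for y
  define Y where "Y = vars (sapp \<theta> u) \<union> vars (sapp \<theta> w1)"
  have Yp: "\<tau> y = Var (\<pi> y) \<and> \<tau>' (\<pi> y) = Var y" if "y \<in> Y" for y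
  proof -
    from that obtain z where z: "z \<in> V" "y \<in> vars (\<theta> z)" by (auto simp: Y_def vars_sapp V)
    from lemG[OF inv[OF z(1)] z(2)] show ?thesis by (auto simp: \<pi>_def)
  qed
  have iY: "inj_on \<pi> Y"
  proof (rule inj_onI)
    fix a b assume ab: "a \<in> Y" "b \<in> Y" "\<pi> a = \<pi> b"
    have "Var a = \<tau>' (\<pi> a)" using Yp[OF ab(1)] by simp
    also have "\<dots> = Var b" using Yp[OF ab(2)] ab(3) by simp
    finally show "a = b" by simp
  qed
  have fY: "finite Y" by (simp add: Y_def finite_vars)
  obtain \<pi>' where \<pi>': "bij \<pi>'" "\<And>y. y \<in> Y \<Longrightarrow> \<pi>' y = \<pi> y"
    using extend_bij[OF fY iY] by blast
  have r: "sapp (\<lambda>x. Var (\<pi>' x)) (sapp \<theta> t) = sapp \<theta>2 (sapp ?\<kappa> t)" if "vars (sapp \<theta> t) \<subseteq> Y" for t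
  proof -
    have "sapp (\<lambda>x. Var (\<pi>' x)) (sapp \<theta> t) = sapp \<tau> (sapp \<theta> t)"
      by (rule sapp_cong) (use that \<pi>'(2) Yp in auto)
    also have "\<dots> = sapp \<eta> t" by (simp add: sapp_comp \<tau>[symmetric])
    finally show ?thesis by (simp add: e)
  qed
  have "vars (sapp \<theta> u) \<subseteq> Y" "vars (sapp \<theta> w1) \<subseteq> Y" by (auto simp: Y_def)
  note rr = r[OF this(1)] r[OF this(2)]
  show ?thesis unfolding ren_eq_def renaming_def
    by (intro exI[of _ "\<lambda>x. Var (\<pi>' x)"] conjI exI[of _ \<pi>']) (simp_all add: \<pi>'(1) rr)
qed



lemma class_ren: "F \<in> flow_classes \<Longrightarrow> p1 \<in> F \<Longrightarrow> p2 \<in> F \<Longrightarrow> \<exists>\<alpha>. bij \<alpha> \<and> p2 = ren \<alpha> p1"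
proof -
  assume "F \<in> flow_classes" "p1 \<in> F" "p2 \<in> F"
  then obtain p0 where "F = cls p0" by (auto simp: flow_classes_def)
  then have "ren_eq p0 p1" "ren_eq p0 p2" using \<open>p1 \<in> F\<close> \<open>p2 \<in> F\<close> by (auto simp: cls_def)
  then have "ren_eq p1 p2" using ren_eq_trans[OF ren_eq_sym] by blast
  then show ?thesis by (simp add: ren_eq_iff)
qed

lemma flow_prod_D:
  assumes "flow_prod p q r"
  obtains \<pi> \<theta> where "bij \<pi>"
    "(vars (fst p) \<union> vars (snd p)) \<inter>
        (vars (sapp (\<lambda>x. Var (\<pi> x)) (fst q)) \<union> vars (sapp (\<lambda>x. Var (\<pi> x)) (snd q))) = {}"
    "mgu \<theta> (snd p) (sapp (\<lambda>x. Var (\<pi> x)) (fst q))"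
    "r = (sapp \<theta> (fst p), sapp \<theta> (sapp (\<lambda>x. Var (\<pi> x)) (snd q)))"
  using assms unfolding flow_prod_def renaming_def by blast

lemma prod_unique:
  assumes F: "F \<in> flow_classes" and G: "G \<in> flow_classes"
    and p1: "p1 \<in> F" and q1: "q1 \<in> G" and r1: "flow_prod p1 q1 r1"
    and p2: "p2 \<in> F" and q2: "q2 \<in> G" and r2: "flow_prod p2 q2 r2"
  shows "ren_eq r1 r2"
proof -
  obtain \<alpha> where \<alpha>: "bij \<alpha>" "p2 = ren \<alpha> p1" using class_ren[OF F p1 p2] by blast
  obtain \<gamma> where \<gamma>: "bij \<gamma>" "q2 = ren \<gamma> q1" using class_ren[OF G q1 q2] by blast
  obtain \<pi>1 \<theta>1 where a1: "bij \<pi>1"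
    "(vars (fst p1) \<union> vars (snd p1)) \<inter>
        (vars (sapp (\<lambda>x. Var (\<pi>1 x)) (fst q1)) \<union> vars (sapp (\<lambda>x. Var (\<pi>1 x)) (snd q1))) = {}"
    "mgu \<theta>1 (snd p1) (sapp (\<lambda>x. Var (\<pi>1 x)) (fst q1))"
    "r1 = (sapp \<theta>1 (fst p1), sapp \<theta>1 (sapp (\<lambda>x. Var (\<pi>1 x)) (snd q1)))"
    using flow_prod_D[OF r1] by blast
  obtain \<pi>2 \<theta>2 where a2: "bij \<pi>2"
    "(vars (fst p2) \<union> vars (snd p2)) \<inter>
        (vars (sapp (\<lambda>x. Var (\<pi>2 x)) (fst q2)) \<union> vars (sapp (\<lambda>x. Var (\<pi>2 x)) (snd q2))) = {}"
    "mgu \<theta>2 (snd p2) (sapp (\<lambda>x. Var (\<pi>2 x)) (fst q2))"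
    "r2 = (sapp \<theta>2 (fst p2), sapp \<theta>2 (sapp (\<lambda>x. Var (\<pi>2 x)) (snd q2)))"
    using flow_prod_D[OF r2] by blast
  define u where "u = fst p1"
  define v where "v = snd p1"
  define t1 where "t1 = sapp (\<lambda>x. Var (\<pi>1 x)) (fst q1)"
  define w1 where "w1 = sapp (\<lambda>x. Var (\<pi>1 x)) (snd q1)"
  define \<beta> where "\<beta> = \<pi>2 \<circ> \<gamma> \<circ> inv \<pi>1"
  have b\<beta>: "bij \<beta>" unfolding \<beta>_def using a1(1) a2(1) \<gamma>(1)
    by (intro bij_comp) (auto simp: bij_imp_bij_inv)
  have inv1: "inv \<pi>1 (\<pi>1 x) = x" for x using a1(1) by (simp add: bij_is_inj)
  have qt: "sapp (\<lambda>x. Var (\<beta> x)) (sapp (\<lambda>x. Var (\<pi>1 x)) t) =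
            sapp (\<lambda>x. Var (\<pi>2 x)) (sapp (\<lambda>x. Var (\<gamma> x)) t)" for t
    by (simp add: sapp_ren_ren \<beta>_def inv1)
  define V where "V = vars u \<union> vars v \<union> vars t1 \<union> vars w1"
  define k where "k x = (if x \<in> vars u \<union> vars v then \<alpha> x else \<beta> x)" for x
  have disj1: "(vars u \<union> vars v) \<inter> (vars t1 \<union> vars w1) = {}"
    using a1(2) by (simp add: u_def v_def t1_def w1_def)
  have ku: "sapp (\<lambda>x. Var (k x)) s = sapp (\<lambda>x. Var (\<alpha> x)) s" if "vars s \<subseteq> vars u \<union> vars v" for s
    by (rule sapp_cong) (use that in \<open>auto simp: k_def\<close>)
  have kt: "sapp (\<lambda>x. Var (k x)) s = sapp (\<lambda>x. Var (\<beta> x)) s" if "vars s \<subseteq> vars t1 \<union> vars w1" for s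
    by (rule sapp_cong) (use that disj1 in \<open>auto simp: k_def\<close>)
  have eu: "sapp (\<lambda>x. Var (k x)) u = fst p2" "sapp (\<lambda>x. Var (k x)) v = snd p2"
    using ku[of u] ku[of v] \<alpha>(2) by (auto simp: ren_def u_def v_def)
  have et: "sapp (\<lambda>x. Var (k x)) t1 = sapp (\<lambda>x. Var (\<pi>2 x)) (fst q2)"
    "sapp (\<lambda>x. Var (k x)) w1 = sapp (\<lambda>x. Var (\<pi>2 x)) (snd q2)"
    using kt[of t1] kt[of w1] \<gamma>(2) qt by (auto simp: ren_def t1_def w1_def)
  have inj: "inj_on k V"
  proof (rule inj_onI)
    fix x y assume xy: "x \<in> V" "y \<in> V" "k x = k y"
    have ia: "inj \<alpha>" using \<alpha>(1) bij_is_inj by blast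
    have ib: "inj \<beta>" using b\<beta> bij_is_inj by blast
    have A: "k z \<in> vars (fst p2) \<union> vars (snd p2)" if "z \<in> vars u \<union> vars v" for z
    proof -
      have "k z \<in> vars (sapp (\<lambda>x. Var (k x)) u) \<union> vars (sapp (\<lambda>x. Var (k x)) v)"
        using that by (auto simp: vars_sapp)
      then show ?thesis using eu by simp
    qed
    have B: "k z \<in> vars (sapp (\<lambda>x. Var (\<pi>2 x)) (fst q2)) \<union> vars (sapp (\<lambda>x. Var (\<pi>2 x)) (snd q2))"
      if "z \<in> vars t1 \<union> vars w1" for z
    proof -
      have "k z \<in> vars (sapp (\<lambda>x. Var (k x)) t1) \<union> vars (sapp (\<lambda>x. Var (k x)) w1)"
        using that by (auto simp: vars_sapp)
      then show ?thesis using et by simp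
    qed
    show "x = y"
    proof (cases "x \<in> vars u \<union> vars v")
      case True
      show ?thesis
      proof (cases "y \<in> vars u \<union> vars v")
        case True
        then show ?thesis using \<open>x \<in> vars u \<union> vars v\<close> xy(3) ia by (simp add: k_def inj_eq)
      next
        case False
        then have y1: "y \<in> vars t1 \<union> vars w1" using xy(2) by (auto simp: V_def)
        have "k x \<in> vars (fst p2) \<union> vars (snd p2)" using A[OF True] .
        moreover have "k x \<in> vars (sapp (\<lambda>x. Var (\<pi>2 x)) (fst q2)) \<union> vars (sapp (\<lambda>x. Var (\<pi>2 x)) (snd q2))"
          using B[OF y1] xy(3) by simp
        ultimately show ?thesis using a2(2) by blast
      qed
    next
      case False
      then have x1: "x \<in> vars t1 \<union> vars w1" using xy(1) by (auto simp: V_def)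
      show ?thesis
      proof (cases "y \<in> vars u \<union> vars v")
        case True
        have "k y \<in> vars (fst p2) \<union> vars (snd p2)" using A[OF True] .
        moreover have "k y \<in> vars (sapp (\<lambda>x. Var (\<pi>2 x)) (fst q2)) \<union> vars (sapp (\<lambda>x. Var (\<pi>2 x)) (snd q2))"
          using B[OF x1] xy(3) by simp
        ultimately show ?thesis using a2(2) by blast
      next
        case False
        then show ?thesis using \<open>x \<notin> vars u \<union> vars v\<close> xy(3) ib by (simp add: k_def inj_eq)
      qed
    qed
  qed
  have mgu1: "mgu \<theta>1 v t1" using a1(3) by (simp add: v_def t1_def)
  have mgu2: "mgu \<theta>2 (sapp (\<lambda>x. Var (k x)) v) (sapp (\<lambda>x. Var (k x)) t1)"
    using a2(3) eu et by simp
  have "ren_eq (sapp \<theta>1 u, sapp \<theta>1 w1)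
           (sapp \<theta>2 (sapp (\<lambda>x. Var (k x)) u), sapp \<theta>2 (sapp (\<lambda>x. Var (k x)) w1))"
    by (rule mgu_unique_ren[OF mgu1 mgu2 inj V_def])
  then show ?thesis using a1(4) a2(4) eu et by (simp add: u_def w1_def)
qed



lemma class_flow: "F \<in> flow_classes \<Longrightarrow> p \<in> F \<Longrightarrow> is_flow p"
proof -
  assume "F \<in> flow_classes" "p \<in> F"
  then obtain p0 where p0: "is_flow p0" "F = cls p0" by (auto simp: flow_classes_def)
  then have "ren_eq p0 p" using \<open>p \<in> F\<close> by (simp add: cls_def)
  then obtain \<pi> where "p = ren \<pi> p0" by (auto simp: ren_eq_iff)
  then show ?thesis using is_flow_ren[OF p0(1)] by simp
qed

lemma cls_balanced: "balanced r \<Longrightarrow> p \<in> cls r \<Longrightarrow> balanced p"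
  unfolding cls_def ren_eq_iff by (auto intro: balanced_ren)

lemma cprod_finite:
  assumes F: "F \<in> flow_classes" and G: "G \<in> flow_classes"
  shows "finite (cprod F G)"
proof (cases "cprod F G = {}")
  case False
  then obtain r1 p1 q1 where r1: "p1 \<in> F" "q1 \<in> G" "flow_prod p1 q1 r1"
    unfolding cprod_def by blast
  have "cprod F G \<subseteq> {cls r1}"
  proof
    fix c assume "c \<in> cprod F G"
    then obtain r2 p2 q2 where r2: "c = cls r2" "p2 \<in> F" "q2 \<in> G" "flow_prod p2 q2 r2"
      unfolding cprod_def by blast
    have "ren_eq r1 r2" using prod_unique[OF F G r1 r2(2-4)] .
    then show "c \<in> {cls r1}" using r2(1) cls_eq by simp
  qed
  then show ?thesis using finite_subset by blast
qed simp

lemma wprod_closed: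
  assumes A: "A \<in> balanced_wirings" and B: "B \<in> balanced_wirings"
  shows "wprod A B \<in> balanced_wirings"
proof -
  have AF: "A \<subseteq> flow_classes" "finite A" and BF: "B \<subseteq> flow_classes" "finite B"
    using A B by (auto simp: balanced_wirings_def wiring_def)
  have Ab: "\<And>c p. c \<in> A \<Longrightarrow> p \<in> c \<Longrightarrow> balanced p" using A by (auto simp: balanced_wirings_def)
  have Bb: "\<And>c p. c \<in> B \<Longrightarrow> p \<in> c \<Longrightarrow> balanced p" using B by (auto simp: balanced_wirings_def)
  have eq: "wprod A B = \<Union> ((\<lambda>(f, g). cprod f g) ` (A \<times> B))"
    unfolding wprod_def by auto
  have fin: "finite (wprod A B)" unfolding eq
    using AF BF by (auto intro!: cprod_finite)
  have mem: "cls r \<in> flow_classes \<and> (\<forall>p\<in>cls r. balanced p)" if "c \<in> wprod A B" "c = cls r"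
    "f \<in> A" "g \<in> B" "p \<in> f" "q \<in> g" "flow_prod p q r" for c r f g p q
  proof -
    have "is_flow p" "is_flow q" using class_flow AF BF that by blast+
    moreover have "balanced p" "balanced q" using Ab Bb that by blast+
    ultimately have "balanced r" "is_flow r" using part1[of p q r] that(7) by blast+
    then show ?thesis unfolding flow_classes_def using cls_balanced by (metis (mono_tags, lifting) mem_Collect_eq)
  qed
  have "\<forall>c\<in>wprod A B. c \<in> flow_classes \<and> (\<forall>p\<in>c. balanced p)"
  proof
    fix c assume c: "c \<in> wprod A B"
    then obtain f g r p q where "f \<in> A" "g \<in> B" "p \<in> f" "q \<in> g" "flow_prod p q r" "c = cls r"
      unfolding wprod_def cprod_def by blast
    then show "c \<in> flow_classes \<and> (\<forall>p\<in>c. balanced p)" using mem[OF c] by blast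
  qed
  then show ?thesis using fin by (auto simp: balanced_wirings_def wiring_def)
qed

theorem mainTheorem4:
  shows "(\<forall>f g r. is_flow f \<longrightarrow> is_flow g \<longrightarrow> balanced f \<longrightarrow> balanced g \<longrightarrow>
            flow_prod f g r \<longrightarrow>
            balanced r \<and> flow_hgt r \<le> max (flow_hgt f) (flow_hgt g))
       \<and> (\<forall>A\<in>balanced_wirings. \<forall>B\<in>balanced_wirings. wprod A B \<in> balanced_wirings)
       \<and> semiring_of_wirings balanced_wirings"
proof (intro conjI)
  show "\<forall>f g r. is_flow f \<longrightarrow> is_flow g \<longrightarrow> balanced f \<longrightarrow> balanced g \<longrightarrow>
            flow_prod f g r \<longrightarrow>
            balanced r \<and> flow_hgt r \<le> max (flow_hgt f) (flow_hgt g)"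
    using part1 by blast
  show W: "\<forall>A\<in>balanced_wirings. \<forall>B\<in>balanced_wirings. wprod A B \<in> balanced_wirings"
    using wprod_closed by blast
  show "semiring_of_wirings balanced_wirings"
    unfolding semiring_of_wirings_def
  proof (intro conjI)
    show "\<forall>W\<in>balanced_wirings. wiring W" by (simp add: balanced_wirings_def)
    show "{} \<in> balanced_wirings" by (simp add: balanced_wirings_def wiring_def)
    show "\<forall>A\<in>balanced_wirings. \<forall>B\<in>balanced_wirings. A \<union> B \<in> balanced_wirings"
      by (auto simp: balanced_wirings_def wiring_def)
  qed (use W in blast)
qed

end
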